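(* Let $h\in(0,1]$ and constants $c,c_2$ with $h^2c>c_2>0$, and let $C=\frac{h^2c-c_2}{2(1+h^2c)(1+c_2)}$. Let $m\ge1$ and $\lambda>0$ with $0<\frac{\lambda}{m}<C$. Let $X_1,\dots,X_m$ be independent Bernoulli ($\{0,1\}$-valued) random variables, let $\epsilon_1,\dots,\epsilon_m$ be i.i.d. Rademacher random variables independent of $(X_i)$, and set $\epsilon_i''=\epsilon_i\frac{c+c_2}{2}-\frac{c-c_2}{2}$. Then for any random variables $Y_1,\dots,Y_m$ taking values in $[0,1]$ (defined on the same probability space, with arbitrary dependence on $(X_i)$ and $(\epsilon_i)$), $$\mathbb E\Big[\exp\Big(\frac{\lambda}{m}\sum_{i=1}^m X_i\big[(\epsilon_i+\epsilon_i'')-\epsilon_i''(1-h^2)Y_i\big]\Big)\Big]\le1.$$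
   Context: A Rademacher random variable takes values $+1$ and $-1$ each with probability $1/2$. *)

theory Defs
  imports "HOL-Probability.Probability"
begin

definition bernoulli_rv :: "'a measure \<Rightarrow> ('a \<Rightarrow> real) \<Rightarrow> bool" where
  "bernoulli_rv M Z \<longleftrightarrow> Z \<in> borel_measurable M \<and> (\<forall>x\<in>space M. Z x \<in> {0, 1})"

definition rademacher_rv :: "'a measure \<Rightarrow> ('a \<Rightarrow> real) \<Rightarrow> bool" where
  "rademacher_rv M Z \<longleftrightarrow> Z \<in> borel_measurable M \<and> (\<forall>x\<in>space M. Z x \<in> {-1, 1})
     \<and> measure M {x \<in> space M. Z x = 1} = 1/2"

end

theory Submission imports Defs begin
lemma key:
  fixes a b t :: real
  assumes "0 < a" "a < b" "0 < t" "t \<le> (b - a) / (2 * a * b)"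
  shows "exp (t * a) + exp (- (t * b)) \<le> 2"
proof -
  have tb: "t * (2*a*b) \<le> b - a" using assms by (simp add: pos_le_divide_eq mult_pos_pos)
  have ta1: "t * a \<le> 1"
  proof -
    have "t * a * (2*b) \<le> b - a" using tb by (simp add: algebra_simps)
    also have "\<dots> \<le> 1 * (2*b)" using assms by simp
    finally show ?thesis using assms by (meson mult_le_cancel_right_pos zero_less_mult_iff zero_less_numeral less_trans)
  qed
  have e1: "exp (t*a) \<le> 1 + t*a + (t*a)^2" using exp_bound[of "t*a"] ta1 assms by simp
  have "1 + t*b \<le> exp (t*b)" using exp_ge_add_one_self by simp
  hence e2: "exp (- (t*b)) \<le> 1 / (1 + t*b)" using assms
    by (simp add: exp_minus divide_simps) (smt (verit) mult_pos_pos)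
  have tb2: "t * b \<le> (b - a) / (2*a)"
  proof -
    have "t*b*(2*a) \<le> b - a" using tb by (simp add: algebra_simps)
    thus ?thesis using assms by (simp add: pos_le_divide_eq)
  qed
  have m: "t*a*a*(1 + t*b) \<le> (b - a)/2"
  proof -
    have ta2: "t*a*a \<le> (b-a)*a/(2*b)"
    proof -
      have "t*a*a*(2*b) = t*(2*a*b)*a" by (simp add: algebra_simps)
      also have "\<dots> \<le> (b-a)*a" using tb assms by (simp add: mult_right_mono)
      finally show ?thesis using assms by (simp add: pos_le_divide_eq)
    qed
    have "t*a*a*(1 + t*b) \<le> (b-a)*a/(2*b) * (1 + (b-a)/(2*a))"
      using ta2 tb2 assms by (intro mult_mono) auto
    also have "\<dots> = (b-a)/(2*b) * (a + b)/2" using assms by (simp add: field_simps)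
    also have "\<dots> \<le> (b-a)/(2*b) * (2*b)/2"
      using assms by (intro divide_right_mono mult_left_mono) auto
    also have "\<dots> = (b-a)/2" using assms by simp
    finally show ?thesis .
  qed
  have "(a + t*a*a)*(1 + t*b) \<le> b"
  proof -
    have "(a + t*a*a)*(1 + t*b) = a + t*a*b + t*a*a*(1+t*b)" by (simp add: algebra_simps)
    moreover have "t*a*b \<le> (b-a)/2" using tb by (simp add: algebra_simps)
    ultimately have "(a + t*a*a)*(1 + t*b) \<le> a + (b-a)/2 + (b-a)/2" using m by linarith
    also have "\<dots> = b" by (simp add: field_simps)
    finally show ?thesis .
  qed
  hence "t*((a + t*a*a)*(1 + t*b)) \<le> t*b" using assms by (simp add: mult_left_mono)
  hence h1: "(t*a + (t*a)^2)*(1 + t*b) \<le> (1 + t*b) - 1" by (simp add: algebra_simps power2_eq_square)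
  have D: "1 + t*b > 0" using assms by (simp add: add_pos_pos)
  from h1 D have "t*a + (t*a)^2 \<le> ((1 + t*b) - 1)/(1+t*b)" by (simp add: pos_le_divide_eq)
  also have "\<dots> = 1 - 1/(1+t*b)" using D by (simp add: field_simps)
  finally have "t*a + (t*a)^2 \<le> 1 - 1/(1+t*b)" .
  with e1 e2 show ?thesis by simp
qed

theorem mainTheorem7:
  fixes M :: "'a measure"
    and h c c\<^sub>2 C lam :: real
    and m :: nat
    and X eps Y :: "nat \<Rightarrow> 'a \<Rightarrow> real"
  assumes "prob_space M"
    and "0 < h" "h \<le> 1"
    and "h\<^sup>2 * c > c\<^sub>2" "c\<^sub>2 > 0"
    and "C = (h\<^sup>2 * c - c\<^sub>2) / (2 * (1 + h\<^sup>2 * c) * (1 + c\<^sub>2))"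
    and "m \<ge> 1" "lam > 0" "lam / real m < C"
    and "\<And>i. i \<in> {1..m} \<Longrightarrow> bernoulli_rv M (X i)"
    and "\<And>i. i \<in> {1..m} \<Longrightarrow> rademacher_rv M (eps i)"
    and "prob_space.indep_vars M (\<lambda>_. borel)
           (\<lambda>k. case k of Inl i \<Rightarrow> X i | Inr i \<Rightarrow> eps i) ({1..m} <+> {1..m})"
    and "\<And>i. i \<in> {1..m} \<Longrightarrow> Y i \<in> borel_measurable M"
    and "\<And>i x. i \<in> {1..m} \<Longrightarrow> x \<in> space M \<Longrightarrow> Y i x \<in> {0..1}"
  shows "prob_space.expectation M (\<lambda>x. exp (lam / real m * (\<Sum>i=1..m.
            X i x * ((eps i x + (eps i x * (c + c\<^sub>2) / 2 - (c - c\<^sub>2) / 2))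
                     - (eps i x * (c + c\<^sub>2) / 2 - (c - c\<^sub>2) / 2) * (1 - h\<^sup>2) * Y i x)))) \<le> 1"
proof -
  note A = assms
  interpret P: prob_space M by (rule assms(1))
  define t where "t = lam / real m"
  define a where "a = 1 + c\<^sub>2"
  define b where "b = 1 + h\<^sup>2 * c"
  define I where "I = {1..m}"
  have fI: "finite I" unfolding I_def by simp
  have h2: "0 < h\<^sup>2" "h\<^sup>2 \<le> 1" using A(2,3) by (auto simp: power_le_one)
  have cpos: "c > 0"
  proof (rule ccontr)
    assume "\<not> c > 0"
    hence "h\<^sup>2 * c \<le> 0" using h2 by (simp add: mult_nonneg_nonpos)
    thus False using A(4,5) by simp
  qed
  have tpos: "t > 0" unfolding t_def using A(7,8) by simp
  have apos: "0 < a" and ab: "a < b" unfolding a_def b_def using A(4,5) by auto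
  have tC: "t \<le> (b - a) / (2 * a * b)"
  proof -
    have "C = (b - a) / (2 * a * b)" unfolding a_def b_def A(6) by (simp add: algebra_simps)
    thus ?thesis using A(9) unfolding t_def by simp
  qed
  have keyab: "exp (t * a) + exp (- (t * b)) \<le> 2" by (rule key[OF apos ab tpos tC])
  define w where "w = (exp (t * a) + exp (- (t * b))) / 2 - 1"
  have w: "-1 \<le> w" "w \<le> 0" unfolding w_def using keyab
    by (auto simp: add_nonneg_nonneg less_imp_le)
  define f where "f = (\<lambda>e::real. (if e = 1 then exp (t * a) else exp (- (t * b))) - 1)"
  define W where "W = (\<lambda>i \<omega>. f (eps i \<omega>))"
  define V where "V = (\<lambda>k. case k of Inl i \<Rightarrow> X i | Inr i \<Rightarrow> eps i)"
  define Yf where "Yf = (\<lambda>k::nat+nat. case k of Inl i \<Rightarrow> (\<lambda>e::real. e) | Inr i \<Rightarrow> f)"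
  define G where "G = (\<lambda>k \<omega>. Yf k (V k \<omega>))"
  have fmeas: "f \<in> borel_measurable borel" unfolding f_def by measurable
  have Xm: "\<And>i. i \<in> I \<Longrightarrow> X i \<in> borel_measurable M"
    and X01: "\<And>i x. i \<in> I \<Longrightarrow> x \<in> space M \<Longrightarrow> X i x \<in> {0,1}"
    using A(10) unfolding bernoulli_rv_def I_def by auto
  have em: "\<And>i. i \<in> I \<Longrightarrow> eps i \<in> borel_measurable M"
    and e01: "\<And>i x. i \<in> I \<Longrightarrow> x \<in> space M \<Longrightarrow> eps i x \<in> {-1,1}"
    and eprob: "\<And>i. i \<in> I \<Longrightarrow> measure M {x \<in> space M. eps i x = 1} = 1/2"
    using A(11) unfolding rademacher_rv_def I_def by auto
  have fmeas': "f \<in> borel \<rightarrow>\<^sub>M borel" using fmeas by simp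
  have Vind: "P.indep_vars (\<lambda>_. borel) V (I <+> I)" using A(12) by (simp add: V_def I_def)
  have Ym: "\<And>k. k \<in> I <+> I \<Longrightarrow> Yf k \<in> borel \<rightarrow>\<^sub>M borel"
    using fmeas' by (auto simp: Yf_def split: sum.splits)
  have indep: "P.indep_vars (\<lambda>_. borel) G (I <+> I)"
    unfolding G_def by (rule P.indep_vars_compose2[OF Vind Ym])
  have Xb: "\<And>i x. i \<in> I \<Longrightarrow> x \<in> space M \<Longrightarrow> \<bar>X i x\<bar> \<le> 1"
    using X01 by fastforce
  have Wm: "\<And>i. i \<in> I \<Longrightarrow> W i \<in> borel_measurable M"
    unfolding W_def using fmeas em by (simp add: measurable_compose)
  have Wb: "\<And>i x. i \<in> I \<Longrightarrow> x \<in> space M \<Longrightarrow> \<bar>W i x\<bar> \<le> exp (t*a) + 1"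
  proof -
    have ee: "0 < exp (t*a)" "0 < exp (- (t*b))" "exp (- (t*b)) \<le> 1" using tpos apos ab by auto
    fix i x
    show "\<bar>W i x\<bar> \<le> exp (t*a) + 1"
      unfolding W_def f_def using ee by (smt (verit))
  qed
  have Gint: "\<And>k. k \<in> I <+> I \<Longrightarrow> integrable M (G k)"
  proof -
    fix k assume k: "k \<in> I <+> I"
    show "integrable M (G k)"
    proof (cases k)
      case (Inl i)
      hence i: "i \<in> I" using k by auto
      have "G k = X i" using Inl by (simp add: G_def Yf_def V_def fun_eq_iff)
      moreover have "integrable M (X i)"
        using Xb[OF i] Xm[OF i] by (intro P.integrable_const_bound[where B=1]) (auto intro!: AE_I2)
      ultimately show ?thesis by simp
    next
      case (Inr i)
      hence i: "i \<in> I" using k by auto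
      have "G k = W i" using Inr by (simp add: G_def Yf_def V_def W_def fun_eq_iff)
      moreover have "integrable M (W i)"
        using Wb[OF i] Wm[OF i] by (intro P.integrable_const_bound[where B="exp (t*a) + 1"]) (auto intro!: AE_I2)
      ultimately show ?thesis by simp
    qed
  qed
  have GPlus: "\<And>B \<omega>. B \<subseteq> I \<Longrightarrow> (\<Prod>k\<in>B <+> B. G k \<omega>) = (\<Prod>i\<in>B. X i \<omega> * W i \<omega>)"
  proof -
    fix B \<omega> assume "B \<subseteq> I"
    hence fB: "finite B" using fI finite_subset by blast
    show "(\<Prod>k\<in>B <+> B. G k \<omega>) = (\<Prod>i\<in>B. X i \<omega> * W i \<omega>)"
      by (simp add: prod.Plus[OF fB fB] prod.distrib G_def Yf_def V_def W_def comp_def)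
  qed
  have EX: "\<And>i. i \<in> I \<Longrightarrow> 0 \<le> P.expectation (X i) \<and> P.expectation (X i) \<le> 1"
  proof -
    fix i assume i: "i \<in> I"
    have int: "integrable M (X i)"
      using Xb[OF i] Xm[OF i] by (intro P.integrable_const_bound[where B=1]) (auto intro!: AE_I2)
    have "0 \<le> P.expectation (X i)" by (intro integral_nonneg_AE AE_I2) (use X01[OF i] in fastforce)
    moreover have "P.expectation (X i) \<le> P.expectation (\<lambda>_. 1)"
      by (intro integral_mono) (use X01[OF i] int in fastforce)+
    ultimately show "0 \<le> P.expectation (X i) \<and> P.expectation (X i) \<le> 1" by (simp add: P.prob_space)
  qed
  have EW: "\<And>i. i \<in> I \<Longrightarrow> P.expectation (W i) = w"
  proof -
    fix i assume i: "i \<in> I"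
    let ?S = "{x \<in> space M. eps i x = 1}"
    have S: "?S \<in> sets M" using em[OF i] by measurable
    have "P.expectation (W i) = P.expectation (\<lambda>x. (exp (- (t * b)) - 1) + (exp (t*a) - exp (- (t * b))) * indicator ?S x)"
      by (rule Bochner_Integration.integral_cong) (auto simp: W_def f_def indicator_def)
    also have "\<dots> = P.expectation (\<lambda>x. exp (- (t * b)) - 1) + P.expectation (\<lambda>x. (exp (t*a) - exp (- (t * b))) * indicator ?S x)"
      by (rule Bochner_Integration.integral_add) (use S in \<open>auto simp: P.emeasure_finite less_top[symmetric]\<close>)
    also have "\<dots> = (exp (- (t * b)) - 1) + (exp (t*a) - exp (- (t * b))) * measure M ?S"
      using S by (simp add: P.prob_space)
    also have "\<dots> = w" by (simp only: eprob[OF i]) (simp add: w_def field_simps)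
    finally show "P.expectation (W i) = w" .
  qed
  have Gl: "\<And>i. G (Inl i) = X i" by (simp add: G_def Yf_def V_def fun_eq_iff)
  have Gr: "\<And>i. G (Inr i) = W i" by (simp add: G_def Yf_def V_def W_def fun_eq_iff)
  have termB: "\<And>B. B \<subseteq> I \<Longrightarrow> integrable M (\<lambda>\<omega>. \<Prod>i\<in>B. X i \<omega> * W i \<omega>) \<and>
      P.expectation (\<lambda>\<omega>. \<Prod>i\<in>B. X i \<omega> * W i \<omega>) = (\<Prod>i\<in>B. P.expectation (X i) * w)"
  proof -
    fix B assume B: "B \<subseteq> I"
    hence fB: "finite B" using fI finite_subset by blast
    have sub: "B <+> B \<subseteq> I <+> I" using B by auto
    have indB: "P.indep_vars (\<lambda>_. borel) G (B <+> B)" by (rule P.indep_vars_subset[OF indep sub])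
    have GintB: "\<And>k. k \<in> B <+> B \<Longrightarrow> integrable M (G k)" using Gint sub by blast
    have fBB: "finite (B <+> B)" using fB by simp
    have eqf: "(\<lambda>\<omega>. \<Prod>k\<in>B <+> B. G k \<omega>) = (\<lambda>\<omega>. \<Prod>i\<in>B. X i \<omega> * W i \<omega>)"
      using GPlus[OF B] by simp
    have "integrable M (\<lambda>\<omega>. \<Prod>k\<in>B <+> B. G k \<omega>)"
      by (rule P.indep_vars_integrable[OF fBB indB GintB])
    moreover have "P.expectation (\<lambda>\<omega>. \<Prod>k\<in>B <+> B. G k \<omega>) = (\<Prod>k\<in>B <+> B. P.expectation (G k))"
      by (rule P.indep_vars_lebesgue_integral[OF fBB indB GintB])
    moreover have "(\<Prod>k\<in>B <+> B. P.expectation (G k)) = (\<Prod>i\<in>B. P.expectation (X i) * w)"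
    proof -
      have "(\<Prod>k\<in>B <+> B. P.expectation (G k)) = (\<Prod>i\<in>B. P.expectation (X i)) * (\<Prod>i\<in>B. P.expectation (W i))"
        by (simp add: prod.Plus[OF fB fB] comp_def Gl Gr)
      also have "\<dots> = (\<Prod>i\<in>B. P.expectation (X i)) * (\<Prod>i\<in>B. w)"
        using EW B by (metis (no_types, lifting) prod.cong subsetD)
      finally show ?thesis by (simp add: prod.distrib)
    qed
    ultimately show "integrable M (\<lambda>\<omega>. \<Prod>i\<in>B. X i \<omega> * W i \<omega>) \<and>
      P.expectation (\<lambda>\<omega>. \<Prod>i\<in>B. X i \<omega> * W i \<omega>) = (\<Prod>i\<in>B. P.expectation (X i) * w)"
      unfolding eqf by simp
  qed
  define F where "F = (\<lambda>\<omega>. \<Prod>i\<in>I. X i \<omega> * W i \<omega> + 1)"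
  have Fexp: "F = (\<lambda>\<omega>. \<Sum>B\<in>Pow I. \<Prod>i\<in>B. X i \<omega> * W i \<omega>)"
    unfolding F_def by (simp add: prod_add[OF fI])
  have Fint: "integrable M F"
    unfolding Fexp by (rule Bochner_Integration.integrable_sum) (use termB in auto)
  have EF: "P.expectation F = (\<Prod>i\<in>I. P.expectation (X i) * w + 1)"
  proof -
    have "P.expectation F = (\<Sum>B\<in>Pow I. P.expectation (\<lambda>\<omega>. \<Prod>i\<in>B. X i \<omega> * W i \<omega>))"
      unfolding Fexp by (rule Bochner_Integration.integral_sum) (use termB in auto)
    also have "\<dots> = (\<Sum>B\<in>Pow I. \<Prod>i\<in>B. P.expectation (X i) * w)"
      by (rule sum.cong) (use termB in auto)
    also have "\<dots> = (\<Prod>i\<in>I. P.expectation (X i) * w + 1)"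
      by (simp add: prod_add[OF fI])
    finally show ?thesis .
  qed
  have EF1: "P.expectation F \<le> 1"
    unfolding EF
  proof (rule prod_le_1)
    fix i assume i: "i \<in> I"
    have p: "0 \<le> P.expectation (X i)" "P.expectation (X i) \<le> 1" using EX[OF i] by auto
    have "P.expectation (X i) * w \<le> 0" using p w by (simp add: mult_nonneg_nonpos)
    moreover have "-1 \<le> P.expectation (X i) * w"
    proof -
      have "P.expectation (X i) * (-1) \<le> P.expectation (X i) * w" using p w by (intro mult_left_mono) auto
      thus ?thesis using p by linarith
    qed
    ultimately show "0 \<le> P.expectation (X i) * w + 1 \<and> P.expectation (X i) * w + 1 \<le> 1" by linarith
  qed
  have pw: "\<And>i \<omega>. i \<in> I \<Longrightarrow> \<omega> \<in> space M \<Longrightarrow>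
      exp (t * (X i \<omega> * ((eps i \<omega> + (eps i \<omega> * (c + c\<^sub>2) / 2 - (c - c\<^sub>2) / 2))
                     - (eps i \<omega> * (c + c\<^sub>2) / 2 - (c - c\<^sub>2) / 2) * (1 - h\<^sup>2) * Y i \<omega>)))
      \<le> X i \<omega> * W i \<omega> + 1 \<and> 0 \<le> X i \<omega> * W i \<omega> + 1"
  proof -
    fix i \<omega> assume i: "i \<in> I" and om: "\<omega> \<in> space M"
    define T where "T = (eps i \<omega> + (eps i \<omega> * (c + c\<^sub>2) / 2 - (c - c\<^sub>2) / 2))
                     - (eps i \<omega> * (c + c\<^sub>2) / 2 - (c - c\<^sub>2) / 2) * (1 - h\<^sup>2) * Y i \<omega>"
    have Y: "0 \<le> Y i \<omega>" "Y i \<omega> \<le> 1" using A(14)[of i \<omega>] i om unfolding I_def by auto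
    have hh: "0 \<le> 1 - h\<^sup>2" using h2 by simp
    have "exp (t * (X i \<omega> * T)) \<le> X i \<omega> * W i \<omega> + 1 \<and> 0 \<le> X i \<omega> * W i \<omega> + 1"
    proof (cases "X i \<omega> = 0")
      case True thus ?thesis by simp
    next
      case False
      hence X1: "X i \<omega> = 1" using X01[OF i om] by auto
      show ?thesis
      proof (cases "eps i \<omega> = 1")
        case True
        have T: "T = 1 + c\<^sub>2 - c\<^sub>2 * (1 - h\<^sup>2) * Y i \<omega>" unfolding T_def True by (simp add: field_simps)
        have "0 \<le> c\<^sub>2 * (1 - h\<^sup>2) * Y i \<omega>" using A(5) hh Y by simp
        hence "T \<le> a" unfolding T a_def by linarith
        hence "t * T \<le> t * a" using tpos by simp
        hence "exp (t * T) \<le> exp (t * a)" by simp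
        thus ?thesis using X1 True by (simp add: W_def f_def)
      next
        case False
        hence em1: "eps i \<omega> = -1" using e01[OF i om] by auto
        have T: "T = -1 - c + c * (1 - h\<^sup>2) * Y i \<omega>" unfolding T_def em1 by (simp add: field_simps)
        have "c * (1 - h\<^sup>2) * Y i \<omega> \<le> c * (1 - h\<^sup>2) * 1"
          using cpos hh Y by (intro mult_left_mono) auto
        hence "T \<le> - b" unfolding T b_def by (simp add: algebra_simps)
        hence "t * T \<le> - (t * b)" using tpos by (metis mult_left_mono less_imp_le mult_minus_right)
        hence "exp (t * T) \<le> exp (- (t * b))" by simp
        thus ?thesis using X1 False by (simp add: W_def f_def)
      qed
    qed
    thus "exp (t * (X i \<omega> * ((eps i \<omega> + (eps i \<omega> * (c + c\<^sub>2) / 2 - (c - c\<^sub>2) / 2))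
                     - (eps i \<omega> * (c + c\<^sub>2) / 2 - (c - c\<^sub>2) / 2) * (1 - h\<^sup>2) * Y i \<omega>)))
      \<le> X i \<omega> * W i \<omega> + 1 \<and> 0 \<le> X i \<omega> * W i \<omega> + 1" unfolding T_def .
  qed
  have main: "\<And>\<omega>. \<omega> \<in> space M \<Longrightarrow> exp (lam / real m * (\<Sum>i=1..m.
            X i \<omega> * ((eps i \<omega> + (eps i \<omega> * (c + c\<^sub>2) / 2 - (c - c\<^sub>2) / 2))
                     - (eps i \<omega> * (c + c\<^sub>2) / 2 - (c - c\<^sub>2) / 2) * (1 - h\<^sup>2) * Y i \<omega>))) \<le> F \<omega>
       \<and> 0 \<le> F \<omega>"
  proof -
    fix \<omega> assume om: "\<omega> \<in> space M"
    have "exp (lam / real m * (\<Sum>i=1..m.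
            X i \<omega> * ((eps i \<omega> + (eps i \<omega> * (c + c\<^sub>2) / 2 - (c - c\<^sub>2) / 2))
                     - (eps i \<omega> * (c + c\<^sub>2) / 2 - (c - c\<^sub>2) / 2) * (1 - h\<^sup>2) * Y i \<omega>)))
       = (\<Prod>i\<in>I. exp (t * (X i \<omega> * ((eps i \<omega> + (eps i \<omega> * (c + c\<^sub>2) / 2 - (c - c\<^sub>2) / 2))
                     - (eps i \<omega> * (c + c\<^sub>2) / 2 - (c - c\<^sub>2) / 2) * (1 - h\<^sup>2) * Y i \<omega>))))"
      unfolding t_def I_def by (simp add: sum_distrib_left exp_sum)
    also have "\<dots> \<le> F \<omega>" unfolding F_def
      by (rule prod_mono) (use pw om in auto)
    finally show "exp (lam / real m * (\<Sum>i=1..m.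
            X i \<omega> * ((eps i \<omega> + (eps i \<omega> * (c + c\<^sub>2) / 2 - (c - c\<^sub>2) / 2))
                     - (eps i \<omega> * (c + c\<^sub>2) / 2 - (c - c\<^sub>2) / 2) * (1 - h\<^sup>2) * Y i \<omega>))) \<le> F \<omega>
       \<and> 0 \<le> F \<omega>" using pw om unfolding F_def by (auto intro!: prod_nonneg)
  qed
  have "prob_space.expectation M (\<lambda>x. exp (lam / real m * (\<Sum>i=1..m.
            X i x * ((eps i x + (eps i x * (c + c\<^sub>2) / 2 - (c - c\<^sub>2) / 2))
                     - (eps i x * (c + c\<^sub>2) / 2 - (c - c\<^sub>2) / 2) * (1 - h\<^sup>2) * Y i x)))) \<le> P.expectation F"
    by (rule integral_mono'[OF Fint]) (use main in auto)
  with EF1 show ?thesis by linarith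
qed
end
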